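(* Let $m\ge 1$, let $\ell_1,\dots,\ell_m$ be positive integers, let $p\in[m]$, put $n=\ell_1+\cdots+\ell_m$, and define $\ell'=(\ell'_1,\dots,\ell'_m)$ by $\ell'_i=\ell_i+1$ for $i\neq p$ and $\ell'_p=\ell_p$. Let $\alpha$ be a cyclic word (of length $n+m-1$) over $[m]$ in which each letter $i$ occurs exactly $\ell'_i$ times. Then $\alpha\in\textsf{L-NCN}(\ell')$ if and only if $\alpha=\overline{\omega}$ for some valid word $\omega\in[m]^{n+m-2}$.
   Context: A subword of a word means a not necessarily contiguous subsequence. Given $m$, $p\in[m]$ and positive integers $\ell_1,\dots,\ell_m$ with $n=\sum\ell_i$, a word $\omega\in[m]^{n+m-2}$ is called valid if: the letter $p$ occurs exactly $\ell_p-1$ times; each letter $j\in[m]\setminus\{p\}$ occurs exactly $\ell_j+1$ times; for $i\neq j$ there is no subword $ijij$; and for $i\neq p$ there is no subword $ipi$. A cyclic word is an equivalence class of words under cyclic rotation. For a valid word $\omega$, $\overline{\omega}$ denotes the cyclic word (rotation class) of the word $\omega p$ obtained by appending one letter $p$ at the end (i.e. inserting $p$ between the last and first letters cyclically). For a sequence $x=(x_1,\dots,x_t)$ of positive integers with $N=\sum x_i$, $\textsf{L-NC}(x)$ is the set of words $w=w_1\cdots w_N$ over $[t]$ in which each letter $i$ occurs exactly $x_i$ times and such that there are no indices $a<b<c<d$ and letters $i\neq j$ with $w_a=w_c=i$, $w_b=w_d=j$ (equivalently, the partition of $[N]$ into the sets $\{a: w_a=i\}$ is noncrossing, the block of size $x_i$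 being labeled $i$); these are the labeled noncrossing partitions of type $x$. This condition is invariant under cyclic rotation, and $\textsf{L-NCN}(x)$ denotes the set of rotation classes of elements of $\textsf{L-NC}(x)$ (labeled noncrossing necklaces of type $x$). *)

theory Defs
  imports "HOL-Library.Sublist"
begin

text \<open>Words over [m] are lists of natural numbers with letters in {1..m}.
  Subword = not necessarily contiguous subsequence (subseq).\<close>

definition valid_word :: "nat \<Rightarrow> nat \<Rightarrow> (nat \<Rightarrow> nat) \<Rightarrow> nat list \<Rightarrow> bool" where
  "valid_word m p l \<omega> \<longleftrightarrow>
     length \<omega> = (\<Sum>i=1..m. l i) + m - 2 \<and>
     set \<omega> \<subseteq> {1..m} \<and>
     count_list \<omega> p = l p - 1 \<and>
     (\<forall>j\<in>{1..m}. j \<noteq> p \<longrightarrow> count_list \<omega> j = l j + 1) \<and>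
     (\<forall>i j. i \<noteq> j \<longrightarrow> \<not> subseq [i, j, i, j] \<omega>) \<and>
     (\<forall>i. i \<noteq> p \<longrightarrow> \<not> subseq [i, p, i] \<omega>)"

text \<open>Cyclic word: rotation class of a word.\<close>
definition rot_class :: "'a list \<Rightarrow> 'a list set" where
  "rot_class w = {rotate k w | k. True}"

definition LNC :: "nat \<Rightarrow> (nat \<Rightarrow> nat) \<Rightarrow> nat list set" where
  "LNC t x = {w. set w \<subseteq> {1..t} \<and> length w = (\<Sum>i=1..t. x i) \<and>
      (\<forall>i\<in>{1..t}. count_list w i = x i) \<and>
      \<not> (\<exists>a b c d i j. a < b \<and> b < c \<and> c < d \<and> d < length w \<and> i \<noteq> j \<and>
            w ! a = i \<and> w ! c = i \<and> w ! b = j \<and> w ! d = j)}"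

definition LNCN :: "nat \<Rightarrow> (nat \<Rightarrow> nat) \<Rightarrow> nat list set set" where
  "LNCN t x = rot_class ` LNC t x"

end

theory Submission imports Defs begin
definition NCs :: "nat list \<Rightarrow> bool" where
  "NCs w \<longleftrightarrow> (\<forall>i j. i \<noteq> j \<longrightarrow> \<not> subseq [i,j,i,j] w)"

lemma subseq_single: "subseq xs [x] \<Longrightarrow> xs = [] \<or> xs = [x]"
  by (cases xs) (auto split: if_splits)

lemma snoc4:
  assumes "subseq [i,j,i,j] (ys @ [x])"
  shows "subseq [i,j,i,j] ys \<or> (j = x \<and> subseq [i,j,i] ys)"
proof -
  obtain xs1 xs2 where e: "[i,j,i,j] = xs1 @ xs2" "subseq xs1 ys" "subseq xs2 [x]"
    using assms by (auto elim: subseq_appendE)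
  from e(3) have "xs2 = [] \<or> xs2 = [x]" by (rule subseq_single)
  then show ?thesis
  proof
    assume "xs2 = []" then show ?thesis using e by simp
  next
    assume h: "xs2 = [x]"
    with e(1) have "xs1 = [i,j,i]" "j = x" by (auto simp: append_eq_Cons_conv Cons_eq_append_conv)
    then show ?thesis using e by simp
  qed
qed

lemma NCs_rotate1: "NCs w \<Longrightarrow> NCs (rotate1 w)"
proof (cases w)
  case Nil then show "NCs w \<Longrightarrow> NCs (rotate1 w)" by simp
next
  case (Cons x xs)
  assume nc: "NCs w"
  show "NCs (rotate1 w)" unfolding NCs_def
  proof (intro allI impI notI)
    fix i j assume ij: "(i::nat) \<noteq> j" and s: "subseq [i,j,i,j] (rotate1 w)"
    from s Cons have "subseq [i,j,i,j] (xs @ [x])" by simp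
    then have "subseq [i,j,i,j] xs \<or> (j = x \<and> subseq [i,j,i] xs)" by (rule snoc4)
    then show False
    proof
      assume "subseq [i,j,i,j] xs"
      then have "subseq [i,j,i,j] (x#xs)" by (rule list_emb.list_emb_Cons)
      then have "subseq [i,j,i,j] w" using Cons by simp
      then show False using nc ij unfolding NCs_def by blast
    next
      assume jx: "j = x \<and> subseq [i,j,i] xs"
      then have "subseq [i,j,i] xs" by blast
      then have "subseq (x # [i,j,i]) (x # xs)" by simp
      then have "subseq [j,i,j,i] w" using Cons jx by simp
      moreover have "j \<noteq> i" using ij by simp
      ultimately show False using nc unfolding NCs_def by blast
    qed
  qed
qed

lemma NCs_rotate: "NCs w \<Longrightarrow> NCs (rotate k w)"
  by (induction k) (auto simp: NCs_rotate1)

lemma subseq_idx: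
  "subseq ys w \<Longrightarrow> \<exists>ks. length ks = length ys \<and> sorted_wrt (<) ks \<and> (\<forall>k\<in>set ks. k < length w) \<and> map (nth w) ks = ys"
proof (induction rule: list_emb.induct)
  case (list_emb_Nil ys) then show ?case by (intro exI[of _ "[]"]) simp
next
  case (list_emb_Cons xs ys y)
  then obtain ks where "length ks = length xs \<and> sorted_wrt (<) ks \<and> (\<forall>k\<in>set ks. k < length ys) \<and> map (nth ys) ks = xs" by blast
  then show ?case by (intro exI[of _ "map Suc ks"]) (auto simp: sorted_wrt_map comp_def elim: sorted_wrt_mono_rel[rotated])
next
  case (list_emb_Cons2 x y xs ys)
  then obtain ks where "length ks = length xs \<and> sorted_wrt (<) ks \<and> (\<forall>k\<in>set ks. k < length ys) \<and> map (nth ys) ks = xs" by blast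
  then show ?case using list_emb_Cons2 by (intro exI[of _ "0 # map Suc ks"]) (auto simp: sorted_wrt_map comp_def elim: sorted_wrt_mono_rel[rotated])
qed

lemma idx_subseq:
  "sorted_wrt (<) ks \<Longrightarrow> (\<forall>k\<in>set ks. k < length w) \<Longrightarrow> subseq (map (nth w) ks) w"
proof (induction w arbitrary: ks)
  case Nil then show ?case by (cases ks) auto
next
  case (Cons x w)
  show ?case
  proof (cases ks)
    case Nil then show ?thesis by simp
  next
    case (Cons i ks')
    have pos: "\<forall>k\<in>set ks'. 0 < k" using Cons \<open>sorted_wrt (<) ks\<close> by auto
    have s': "sorted_wrt (<) (map (\<lambda>k. k - 1) ks')"
      using Cons \<open>sorted_wrt (<) ks\<close> pos by (auto simp: sorted_wrt_map elim!: sorted_wrt_mono_rel[rotated])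
    have b': "\<forall>k\<in>set (map (\<lambda>k. k - 1) ks'). k < length w" using Cons.prems pos Cons by auto
    have eq': "map (nth (x#w)) ks' = map (nth w) (map (\<lambda>k. k - 1) ks')"
      using pos by (auto simp: nth_Cons')
    show ?thesis
    proof (cases i)
      case 0
      have "subseq (map (nth w) (map (\<lambda>k. k - 1) ks')) w" using Cons.IH s' b' by blast
      then have "subseq (map (nth (x#w)) ks') w" by (simp only: eq')
      then show ?thesis using Cons 0 by simp
    next
      case (Suc i')
      have pos2: "\<forall>k\<in>set ks. 0 < k" using Cons pos Suc by auto
      have s2: "sorted_wrt (<) (map (\<lambda>k. k - 1) ks)"
        using \<open>sorted_wrt (<) ks\<close> pos2 by (auto simp: sorted_wrt_map elim!: sorted_wrt_mono_rel[rotated])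
      have b2: "\<forall>k\<in>set (map (\<lambda>k. k - 1) ks). k < length w" using Cons.prems pos2 by auto
      have "subseq (map (nth w) (map (\<lambda>k. k - 1) ks)) w" using Cons.IH s2 b2 by blast
      moreover have e2: "map (nth (x#w)) ks = map (nth w) (map (\<lambda>k. k - 1) ks)"
        using pos2 by (auto simp: nth_Cons')
      ultimately have "subseq (map (nth (x#w)) ks) w" by (simp only: e2)
      then show ?thesis by (metis list_emb.list_emb_Cons)
    qed
  qed
qed

lemma len4: "length (xs::'a list) = 4 \<Longrightarrow> \<exists>a b c d. xs = [a,b,c,d]"
  by (auto simp: eval_nat_numeral length_Suc_conv)

lemma cross_iff:
  "(\<exists>a b c d i j. a < b \<and> b < c \<and> c < d \<and> d < length w \<and> i \<noteq> j \<and>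
            w ! a = i \<and> w ! c = i \<and> w ! b = j \<and> w ! d = j) \<longleftrightarrow> \<not> NCs w"
proof
  assume "\<exists>a b c d i j. a < b \<and> b < c \<and> c < d \<and> d < length w \<and> i \<noteq> j \<and>
            w ! a = i \<and> w ! c = i \<and> w ! b = j \<and> w ! d = j"
  then show "\<not> NCs w"
  proof (elim exE conjE)
    fix a b c d i j
    assume h: "a < b" "b < c" "c < d" "d < length w" "i \<noteq> j"
            "w ! a = i" "w ! c = i" "w ! b = j" "w ! d = j"
    have "subseq (map (nth w) [a,b,c,d]) w" by (rule idx_subseq) (use h in auto)
    moreover have "map (nth w) [a,b,c,d] = [i,j,i,j]" using h by simp
    ultimately have "subseq [i,j,i,j] w" by simp
    then show "\<not> NCs w" using h(5) unfolding NCs_def by blast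
  qed
next
  assume "\<not> NCs w"
  then obtain i j where ij: "i \<noteq> j" "subseq [i,j,i,j] w" unfolding NCs_def by blast
  from subseq_idx[OF ij(2)] obtain ks where hh: "length ks = length [i,j,i,j] \<and> sorted_wrt (<) ks \<and> (\<forall>k\<in>set ks. k < length w) \<and> map (nth w) ks = [i,j,i,j]" ..
  have h0: "length ks = length [i,j,i,j]" using hh by (elim conjE) assumption
  have h1': "sorted_wrt (<) ks" using hh by (elim conjE) assumption
  have h2': "\<forall>k\<in>set ks. k < length w" using hh by (elim conjE) assumption
  have h3': "map (nth w) ks = [i,j,i,j]" using hh by (elim conjE) assumption
  note h = h1' h2' h3'
  have h1: "length ks = 4" using h0 by simp
  from len4[OF h1] obtain a b c d where ks: "ks = [a,b,c,d]" by blast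
  have o: "a < b" "b < c" "c < d" using h(1) ks by auto
  have dl: "d < length w" using h(2) ks by simp
  have n: "w ! a = i" "w ! b = j" "w ! c = i" "w ! d = j" using h(3) ks by auto
  show "\<exists>a b c d i j. a < b \<and> b < c \<and> c < d \<and> d < length w \<and> i \<noteq> j \<and>
            w ! a = i \<and> w ! c = i \<and> w ! b = j \<and> w ! d = j"
    apply (rule exI[of _ a], rule exI[of _ b], rule exI[of _ c], rule exI[of _ d], rule exI[of _ i], rule exI[of _ j])
    using o dl n ij(1) by simp
qed

lemma rot_class_self: "w \<in> rot_class w"
  unfolding rot_class_def by (auto intro: exI[of _ 0])

lemma rot_class_rotate: "rot_class (rotate k w) = rot_class w"
proof (cases "w = []")
  case True then show ?thesis by simp
next
  case False
  define L where "L = length w"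
  have L: "L > 0" using False L_def by simp
  have A: "rotate j w \<in> rot_class (rotate k w)" for j
  proof -
    have km: "k mod L < L" using L by simp
    have a: "k div L * L + k mod L = k" by (rule div_mult_mod_eq)
    have "L - k mod L + k = L + k div L * L" using km a by linarith
    then have "L - k mod L + k = (1 + k div L) * L" by simp
    then have "j + (L - k mod L) + k = j + (1 + k div L) * L" by simp
    then have "(j + (L - k mod L) + k) mod L = j mod L" by (metis mod_mult_self1)
    then have "rotate (j + (L - k mod L)) (rotate k w) = rotate j w"
      by (metis rotate_rotate rotate_conv_mod L_def)
    then show ?thesis unfolding rot_class_def by (metis (mono_tags, lifting) mem_Collect_eq)
  qed
  have B: "rotate j (rotate k w) \<in> rot_class w" for j
    unfolding rot_class_def rotate_rotate by blast
  show ?thesis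
  proof
    show "rot_class (rotate k w) \<subseteq> rot_class w" using B unfolding rot_class_def[of "rotate k w"] by blast
    show "rot_class w \<subseteq> rot_class (rotate k w)" using A unfolding rot_class_def[of w] by blast
  qed
qed

lemma rot_class_mem: "w \<in> rot_class v \<Longrightarrow> \<exists>k. w = rotate k v"
  unfolding rot_class_def by blast


theorem mainTheorem1:
  fixes m p :: nat and l :: "nat \<Rightarrow> nat" and w :: "nat list"
  assumes "m \<ge> 1"
    and "\<forall>i\<in>{1..m}. l i > 0"
    and "p \<in> {1..m}"
    and "length w = (\<Sum>i=1..m. l i) + m - 1"
    and "set w \<subseteq> {1..m}"
    and "\<forall>i\<in>{1..m}. count_list w i = (if i = p then l i else l i + 1)"
  shows "rot_class w \<in> LNCN m (\<lambda>i. if i = p then l i else l i + 1) \<longleftrightarrow>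
         (\<exists>\<omega>. valid_word m p l \<omega> \<and> rot_class w = rot_class (\<omega> @ [p]))"
proof
  assume "rot_class w \<in> LNCN m (\<lambda>i. if i = p then l i else l i + 1)"
  then obtain v where v: "v \<in> LNC m (\<lambda>i. if i = p then l i else l i + 1)" "rot_class w = rot_class v"
    unfolding LNCN_def by blast
  have "NCs v" using v(1) cross_iff[of v] unfolding LNC_def by blast
  moreover obtain k where "w = rotate k v" using rot_class_mem rot_class_self v(2) by metis
  ultimately have ncw: "NCs w" using NCs_rotate by blast
  have "count_list w p = l p" using assms(3,6) by simp
  then have "count_list w p > 0" using assms(2,3) by simp
  then have "p \<in> set w" by (metis count_notin less_irrefl)
  then obtain u t where wut: "w = u @ p # t" by (meson split_list)
  define \<omega> where "\<omega> = t @ u"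
  have rot: "\<omega> @ [p] = rotate (length u + 1) w"
    using rotate_append[of "u @ [p]" t] wut by (simp add: \<omega>_def)
  have nco: "NCs (\<omega> @ [p])" using rot ncw NCs_rotate by metis
  have rc: "rot_class w = rot_class (\<omega> @ [p])" using rot rot_class_rotate by metis
  have sumge: "(\<Sum>i=1..m. l i) \<ge> m"
  proof -
    have "(\<Sum>i=1..m. (1::nat)) \<le> (\<Sum>i=1..m. l i)"
      by (rule sum_mono) (use assms(2) in \<open>auto simp: Suc_le_eq\<close>)
    then show ?thesis by simp
  qed
  have cnt: "count_list \<omega> j = count_list w j - (if j = p then 1 else 0)" for j
    using wut by (simp add: \<omega>_def)
  have "valid_word m p l \<omega>"
    unfolding valid_word_def
  proof (intro conjI allI impI ballI)
    show "length \<omega> = (\<Sum>i=1..m. l i) + m - 2" using assms(4) wut sumge by (simp add: \<omega>_def)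
    show "set \<omega> \<subseteq> {1..m}" using assms(5) wut by (auto simp: \<omega>_def)
    show "count_list \<omega> p = l p - 1" using cnt assms(6) assms(3) by simp
    fix j assume "j \<in> {1..m}" "j \<noteq> p"
    then show "count_list \<omega> j = l j + 1" using cnt assms(6) by simp
  next
    fix i j :: nat assume ij: "i \<noteq> j"
    show "\<not> subseq [i, j, i, j] \<omega>"
    proof
      assume "subseq [i, j, i, j] \<omega>"
      then have "subseq [i, j, i, j] (\<omega> @ [p])" by (rule subseq_rev_drop_many)
      then show False using nco ij unfolding NCs_def by blast
    qed
  next
    fix i :: nat assume ip: "i \<noteq> p"
    show "\<not> subseq [i, p, i] \<omega>"
    proof
      assume "subseq [i, p, i] \<omega>"
      then have "subseq ([i, p, i] @ [p]) (\<omega> @ [p])" by (simp only: subseq_append)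
      then have "subseq [i, p, i, p] (\<omega> @ [p])" by simp
      then show False using nco ip unfolding NCs_def by blast
    qed
  qed
  then show "\<exists>\<omega>. valid_word m p l \<omega> \<and> rot_class w = rot_class (\<omega> @ [p])" using rc by blast
next
  assume "\<exists>\<omega>. valid_word m p l \<omega> \<and> rot_class w = rot_class (\<omega> @ [p])"
  then obtain \<omega> where vw: "valid_word m p l \<omega>" and rc: "rot_class w = rot_class (\<omega> @ [p])" by blast
  have vlen: "length \<omega> = (\<Sum>i=1..m. l i) + m - 2" using vw unfolding valid_word_def by blast
  have vset: "set \<omega> \<subseteq> {1..m}" using vw unfolding valid_word_def by blast
  have vcp: "count_list \<omega> p = l p - 1" using vw unfolding valid_word_def by blast
  have vcj: "\<And>j. j\<in>{1..m} \<Longrightarrow> j \<noteq> p \<Longrightarrow> count_list \<omega> j = l j + 1" using vw unfolding valid_word_def by blast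
  have v4: "\<And>i j. i \<noteq> j \<Longrightarrow> \<not> subseq [i, j, i, j] \<omega>" using vw unfolding valid_word_def by blast
  have v3: "\<And>i. i \<noteq> p \<Longrightarrow> \<not> subseq [i, p, i] \<omega>" using vw unfolding valid_word_def by blast
  have sumge: "(\<Sum>i=1..m. l i) \<ge> m"
  proof -
    have "(\<Sum>i=1..m. (1::nat)) \<le> (\<Sum>i=1..m. l i)"
      by (rule sum_mono) (use assms(2) in \<open>auto simp: Suc_le_eq\<close>)
    then show ?thesis by simp
  qed
  have nc: "NCs (\<omega> @ [p])" unfolding NCs_def
  proof (intro allI impI notI)
    fix i j :: nat assume ij: "i \<noteq> j" and s: "subseq [i,j,i,j] (\<omega> @ [p])"
    from snoc4[OF s] show False
    proof
      assume "subseq [i,j,i,j] \<omega>" then show False using v4 ij by blast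
    next
      assume h: "j = p \<and> subseq [i,j,i] \<omega>"
      then have "subseq [i,p,i] \<omega>" "i \<noteq> p" using ij by auto
      then show False using v3 by blast
    qed
  qed
  have "\<omega> @ [p] \<in> LNC m (\<lambda>i. if i = p then l i else l i + 1)"
    unfolding LNC_def
  proof (intro CollectI conjI ballI)
    show "set (\<omega> @ [p]) \<subseteq> {1..m}" using vset assms(3) by simp
    show "length (\<omega> @ [p]) = (\<Sum>i=1..m. if i = p then l i else l i + 1)"
    proof -
      have "(\<Sum>i=1..m. if i = p then l i else l i + 1) = (\<Sum>i=1..m. l i + (if i = p then 0 else 1))"
        by (rule sum.cong) auto
      also have "\<dots> = (\<Sum>i=1..m. l i) + (\<Sum>i=1..m. (if i = p then 0 else 1::nat))"
        by (simp add: sum.distrib)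
      also have "(\<Sum>i=1..m. (if i = p then 0 else 1::nat)) = m - 1"
      proof -
        have e: "{1..m} \<inter> - {x. x = p} = {1..m} - {p}" by auto
        have "(\<Sum>i=1..m. (if i = p then 0 else 1::nat)) = card ({1..m} \<inter> - {x. x = p})"
          using sum.If_cases[of "{1..m}" "\<lambda>i. i = p" "\<lambda>_. 0::nat" "\<lambda>_. 1"] by simp
        then have "(\<Sum>i=1..m. (if i = p then 0 else 1::nat)) = card ({1..m} - {p})" by (simp only: e)
        then show ?thesis using assms(3) by simp
      qed
      finally show ?thesis using vlen sumge assms(1) by simp
    qed
    fix i assume "i \<in> {1..m}"
    show "count_list (\<omega> @ [p]) i = (if i = p then l i else l i + 1)"
    proof (cases "i = p")
      case True
      have "l p > 0" using assms(2,3) by blast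
      then show ?thesis using True vcp by simp
    next
      case False
      then show ?thesis using vcj[OF \<open>i \<in> {1..m}\<close> False] by simp
    qed
  next
    show "\<not> (\<exists>a b c d i j. a < b \<and> b < c \<and> c < d \<and> d < length (\<omega> @ [p]) \<and> i \<noteq> j \<and>
            (\<omega> @ [p]) ! a = i \<and> (\<omega> @ [p]) ! c = i \<and> (\<omega> @ [p]) ! b = j \<and> (\<omega> @ [p]) ! d = j)"
      by (subst cross_iff) (simp add: nc)
  qed
  then show "rot_class w \<in> LNCN m (\<lambda>i. if i = p then l i else l i + 1)"
    unfolding LNCN_def using rc by blast
qed

end
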